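(* Let $G=SL(2,\mathbb{C})$, let $\Gamma$ be a finitely generated group with fixed generators $\bar{\epsilon}_1,\dots,\bar{\epsilon}_n$, let $\rho:\Gamma\to G$ be a representation and $A=(A_1,\dots,A_n)=(\rho(\bar{\epsilon}_1),\dots,\rho(\bar{\epsilon}_n))\in G^{\times n}$. The following are equivalent: (i) $A$ is stable; (ii) there exist $1\le j,k,l\le n$ such that $(\rho(\bar{\epsilon}_j),\rho(\bar{\epsilon}_k),\rho(\bar{\epsilon}_l))\in G^{\times3}$ is stable; (iii) there exist $1\le j,k,l\le n$ such that $\sigma_{jk}(A)\neq0$ or $\Delta_{jkl}(A)\neq0$; (iv) $A$ is not similar to an upper triangular $n$-matrix; (v) $\rho$ is irreducible.
   Context: $G$ acts on $G^{\times n}$ by simultaneous conjugation $g\cdot A=(gA_1g^{-1},\dots,gA_ng^{-1})$; a point is stable if its orbit map $G\to G^{\times n}$ is proper. Similar means conjugate by a common element of $GL(2,\mathbb{C})$; upper triangular $n$-matrix means all components upper triangular. $\sigma_{jk}(A)=\mathsf{tr}(A_jA_kA_j^{-1}A_k^{-1})-2$ and $\Delta_{jkl}(A)=(\mathsf{tr}(A_jA_kA_l)-\mathsf{tr}(A_lA_kA_j))^2$. $\rho$ is irreducible if no proper nonzero subspace of $\mathbb{C}^2$ is invariant under $\rho(\Gamma)$. *)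

theory Defs
  imports "HOL-Analysis.Analysis" "HOL-Algebra.Group" "HOL-Algebra.Generated_Groups"
begin

type_synonym cmat2 = "complex^2^2"

definition SL2 :: "cmat2 set" where
  "SL2 = {M. det M = 1}"

definition SL2_group :: "cmat2 monoid" where
  "SL2_group = \<lparr>carrier = SL2, mult = (**), one = mat 1\<rparr>"

definition SL2_tuples :: "(cmat2^'n) set" where
  "SL2_tuples = {A. \<forall>i. A $ i \<in> SL2}"

definition conj_act :: "cmat2 \<Rightarrow> cmat2^'n \<Rightarrow> cmat2^'n" where
  "conj_act g A = (\<chi> i. g ** A $ i ** matrix_inv g)"

definition stable :: "cmat2^'n \<Rightarrow> bool" where
  "stable A \<longleftrightarrow> proper_map (top_of_set SL2) (top_of_set SL2_tuples) (\<lambda>g. conj_act g A)"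

definition triple :: "'a \<Rightarrow> 'a \<Rightarrow> 'a \<Rightarrow> 'a^3" where
  "triple a b c = (\<chi> t. if t = 0 then a else if t = 1 then b else c)"

definition sigma :: "cmat2^'n \<Rightarrow> 'n \<Rightarrow> 'n \<Rightarrow> complex" where
  "sigma A j k = trace (A$j ** A$k ** matrix_inv (A$j) ** matrix_inv (A$k)) - 2"

definition Delta :: "cmat2^'n \<Rightarrow> 'n \<Rightarrow> 'n \<Rightarrow> 'n \<Rightarrow> complex" where
  "Delta A j k l = (trace (A$j ** A$k ** A$l) - trace (A$l ** A$k ** A$j))^2"

definition upper_triangular2 :: "cmat2 \<Rightarrow> bool" where
  "upper_triangular2 M \<longleftrightarrow> (\<forall>i j. j < i \<longrightarrow> M $ i $ j = 0)"

definition similar_upper_triangular :: "cmat2^'n \<Rightarrow> bool" where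
  "similar_upper_triangular A \<longleftrightarrow>
     (\<exists>P::cmat2. invertible P \<and> (\<forall>i. upper_triangular2 (P ** A $ i ** matrix_inv P)))"

definition irreducible_rep :: "('g, 'b) monoid_scheme \<Rightarrow> ('g \<Rightarrow> cmat2) \<Rightarrow> bool" where
  "irreducible_rep \<Gamma> \<rho> \<longleftrightarrow>
     \<not> (\<exists>V :: (complex^2) set. vec.subspace V \<and> V \<noteq> {0} \<and> V \<noteq> UNIV \<and>
          (\<forall>x\<in>carrier \<Gamma>. \<forall>v\<in>V. \<rho> x *v v \<in> V))"

end

theory Submission
  imports Defs
begin


lemma two_lt_one: "(2::2) < 1" by (simp add: less_bit0_def bit0.Rep_1 bit0.Rep_numeral)
lemma ut2: "upper_triangular2 M \<longleftrightarrow> M$1$2 = 0"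
  unfolding upper_triangular2_def
  using two_lt_one by (auto simp add: forall_2 )

definition adj2 :: "cmat2 \<Rightarrow> cmat2" where
  "adj2 M = vector [vector [M$2$2, -(M$1$2)], vector [-(M$2$1), M$1$1]]"
definition cr :: "complex^2 \<Rightarrow> complex^2 \<Rightarrow> complex" where
  "cr u w = u$1 * w$2 - u$2 * w$1"
definition eig :: "cmat2 \<Rightarrow> complex^2 \<Rightarrow> bool" where
  "eig M v \<longleftrightarrow> cr (M *v v) v = 0"
definition cj :: "cmat2 \<Rightarrow> cmat2 \<Rightarrow> cmat2" where
  "cj P M = P ** M ** adj2 P"

lemma mm2: "((A::cmat2) ** B)$i$j = A$i$1 * B$1$j + A$i$2 * B$2$j"
  by (simp add: matrix_matrix_mult_def sum_2)
lemma mv2: "((A::cmat2) *v v)$i = A$i$1 * v$1 + A$i$2 * v$2"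
  by (simp add: matrix_vector_mult_def sum_2)
lemma mat1_2: "(mat 1 :: cmat2)$i$j = (if i = j then 1 else 0)"
  by (simp add: mat_def)
lemma one_ne_two2 [simp]: "(1::2) \<noteq> 2" "(2::2) \<noteq> 1" by simp_all
lemma meq2: "(A::cmat2) = B \<longleftrightarrow> A$1$1 = B$1$1 \<and> A$1$2 = B$1$2 \<and> A$2$1 = B$2$1 \<and> A$2$2 = B$2$2"
  by (auto simp add: vec_eq_iff forall_2)
lemma veq2: "(v::complex^2) = w \<longleftrightarrow> v$1 = w$1 \<and> v$2 = w$2"
  by (auto simp add: vec_eq_iff forall_2)
lemma tr2: "trace (A::cmat2) = A$1$1 + A$2$2"
  by (simp add: trace_def sum_2)
lemma adj2_nth [simp]: "adj2 M $1$1 = M$2$2" "adj2 M $1$2 = -(M$1$2)" "adj2 M $2$1 = -(M$2$1)" "adj2 M $2$2 = M$1$1"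
  by (simp_all add: adj2_def)

lemmas m2s = mm2 mv2 mat1_2 meq2 veq2 tr2 det_2 cr_def eig_def

lemma adj2_right: "det P = 1 \<Longrightarrow> P ** adj2 P = mat 1"
  by (simp add: m2s) (simp add: algebra_simps)
lemma adj2_left: "det P = 1 \<Longrightarrow> adj2 P ** P = mat 1"
  by (simp add: m2s) (simp add: algebra_simps)

lemma matrix_inv_eqI:
  fixes A B :: "'a::comm_ring_1^'n^'n"
  assumes "A ** B = mat 1" "B ** A = mat 1"
  shows "matrix_inv A = B"
proof -
  have ex: "\<exists>A'. A ** A' = mat 1 \<and> A' ** A = mat 1" using assms by blast
  define C where "C = matrix_inv A"
  have C: "A ** C = mat 1 \<and> C ** A = mat 1"
    unfolding C_def matrix_inv_def by (rule someI_ex[OF ex])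
  have "C = C ** (A ** B)" using assms by (simp add: matrix_mul_rid)
  also have "\<dots> = (C ** A) ** B" by (simp add: matrix_mul_assoc)
  also have "\<dots> = B" using C by (simp add: matrix_mul_lid)
  finally show ?thesis unfolding C_def .
qed

lemma inv_SL: "det P = 1 \<Longrightarrow> matrix_inv P = adj2 P"
  by (rule matrix_inv_eqI) (simp_all add: adj2_left adj2_right)

lemma inv_gen:
  fixes P :: "'a::comm_ring_1^'n^'n"
  assumes "invertible P" shows "P ** matrix_inv P = mat 1 \<and> matrix_inv P ** P = mat 1"
  using assms unfolding invertible_def matrix_inv_def by (rule someI_ex)

lemma det_adj2: "det (adj2 M) = det M" by (simp add: m2s algebra_simps)

lemma cj_mult: "det P = 1 \<Longrightarrow> cj P (M ** N) = cj P M ** cj P N"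
proof -
  assume P: "det P = 1"
  have "cj P M ** cj P N = P ** M ** (adj2 P ** P) ** N ** adj2 P"
    unfolding cj_def by (simp add: matrix_mul_assoc)
  also have "\<dots> = cj P (M ** N)" unfolding cj_def adj2_left[OF P] by (simp add: matrix_mul_rid matrix_mul_assoc)
  finally show ?thesis by simp
qed
lemma cj_adj: "cj P (adj2 M) = adj2 (cj P M)"
  by (simp add: m2s cj_def algebra_simps)
lemma cj_trace: "det P = 1 \<Longrightarrow> trace (cj P M) = trace M"
  unfolding cj_def by (metis adj2_left matrix_mul_assoc matrix_mul_lid trace_mul_sym)
lemma cj_det: "det P = 1 \<Longrightarrow> det (cj P M) = det M"
  unfolding cj_def by (simp add: det_mul det_adj2)
lemma cr_P: "cr (P *v u) (P *v w) = det P * cr u w"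
  by (simp add: m2s) algebra
lemma adj_P_v: "det P = 1 \<Longrightarrow> P *v (adj2 P *v w) = w"
  by (simp add: matrix_vector_mul_assoc adj2_right)
lemma adj_P_v2: "det P = 1 \<Longrightarrow> adj2 P *v (P *v w) = w"
  by (simp add: matrix_vector_mul_assoc adj2_left)
lemma cj_v: "det P = 1 \<Longrightarrow> cj P M *v (P *v w) = P *v (M *v w)"
  unfolding cj_def by (simp add: matrix_vector_mul_assoc[symmetric] adj_P_v2)
lemma cj_eig: "det P = 1 \<Longrightarrow> eig (cj P M) (P *v w) \<longleftrightarrow> eig M w"
  unfolding eig_def by (simp add: cj_v cr_P)
lemma eig_adj: "eig (adj2 M) v \<longleftrightarrow> eig M v"
  by (simp add: m2s) algebra



lemma Pv_nz: fixes P :: cmat2 assumes "det P = 1" "v \<noteq> 0" shows "P *v v \<noteq> 0"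
proof
  assume "P *v v = 0"
  then have "adj2 P *v (P *v v) = 0" by simp
  then show False using adj_P_v2[OF assms(1)] assms(2) by simp
qed

lemma nz1: fixes w :: "complex^2" shows "w$2 = 0 \<Longrightarrow> w \<noteq> 0 \<Longrightarrow> w$1 \<noteq> 0"
  by (metis veq2 zero_index)
lemma nz2: fixes w :: "complex^2" shows "w$1 = 0 \<Longrightarrow> w \<noteq> 0 \<Longrightarrow> w$2 \<noteq> 0"
  by (metis veq2 zero_index)

lemma eig_e1: assumes "w$2 = 0" "w \<noteq> 0" shows "eig M w \<longleftrightarrow> M$2$1 = 0"
proof -
  have "cr (M *v w) w = - (M$2$1 * (w$1 * w$1))" by (simp add: cr_def mv2 assms(1))
  then show ?thesis using nz1[OF assms] by (simp add: eig_def)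
qed
lemma eig_e2: assumes "w$1 = 0" "w \<noteq> 0" shows "eig M w \<longleftrightarrow> M$1$2 = 0"
proof -
  have "cr (M *v w) w = M$1$2 * (w$2 * w$2)" by (simp add: cr_def mv2 assms(1))
  then show ?thesis using nz2[OF assms] by (simp add: eig_def)
qed
lemma eig_ex: assumes "v \<noteq> 0" shows "eig M v \<longleftrightarrow> (\<exists>c. M *v v = c *s v)"
proof
  assume "\<exists>c. M *v v = c *s v" then show "eig M v" by (auto simp: m2s)
next
  assume e: "eig M v"
  show "\<exists>c. M *v v = c *s v"
  proof (cases "v$1 = 0")
    case True
    then have "v$2 \<noteq> 0" using assms by (simp add: veq2)
    then show ?thesis using e True
      by (intro exI[of _ "(M *v v)$2 / v$2"]) (simp add: veq2 cr_def eig_def)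
  next
    case False
    then show ?thesis using e
      by (intro exI[of _ "(M *v v)$1 / v$1"]) (simp add: veq2 cr_def eig_def field_simps)
  qed
qed

lemma eig_mult: assumes "v \<noteq> 0" "eig M v" "eig N v" shows "eig (M ** N) v"
proof -
  obtain c where c: "M *v v = c *s v" using assms eig_ex by blast
  obtain d where d: "N *v v = d *s v" using assms eig_ex by blast
  have "(M ** N) *v v = (c * d) *s v"
    by (simp add: matrix_vector_mul_assoc[symmetric] d vector_scalar_commute c)
  then show ?thesis using assms eig_ex by blast
qed

lemma eig_one: "eig (mat 1) v" by (simp add: m2s)

lemma eig_par: assumes "v \<noteq> 0" "w \<noteq> 0" "cr v w = 0" "eig M v" shows "eig M w"
proof -
  obtain c where c: "M *v v = c *s v" using assms eig_ex by blast
  have "v$1 \<noteq> 0 \<or> v$2 \<noteq> 0" using assms(1) by (simp add: veq2)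
  then obtain t where t: "w = t *s v"
  proof
    assume h: "v$1 \<noteq> 0"
    show ?thesis using assms(3) h by (intro that[of "w$1 / v$1"]) (simp add: veq2 cr_def field_simps)
  next
    assume h: "v$2 \<noteq> 0"
    show ?thesis using assms(3) h by (intro that[of "w$2 / v$2"]) (simp add: veq2 cr_def field_simps)
  qed
  have "M *v w = c *s w" by (simp add: t vector_scalar_commute c)
  then show ?thesis using assms eig_ex by blast
qed


lemma exists_eig: "\<exists>v. v \<noteq> 0 \<and> eig M v"
proof (cases "M$1$2 = 0")
  case True
  then show ?thesis by (intro exI[of _ "vector [0,1]"]) (simp add: m2s)
next
  case False
  define t where "t = M$1$1 + M$2$2"
  define l where "l = (t + csqrt (t^2 - 4 * det M)) / 2"
  have l: "l^2 - t * l + det M = 0"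
  proof -
    have "2*l - t = csqrt (t^2 - 4 * det M)" unfolding l_def by (simp add: field_simps)
    then have "(2*l - t)^2 = t^2 - 4 * det M" by (simp add: power2_csqrt)
    then show ?thesis by algebra
  qed
  define v :: "complex^2" where "v = vector [M$1$2, l - M$1$1]"
  have Mv: "M *v v = vector [M$1$2 * l, M$2$1*M$1$2 + M$2$2*(l - M$1$1)]"
    by (simp add: v_def m2s algebra_simps)
  have "cr (M *v v) v = M$1$2 * (l^2 - t*l + det M)"
    unfolding Mv unfolding v_def t_def cr_def by (simp add: det_2 algebra_simps power2_eq_square)
  then have "eig M v" using l by (simp add: eig_def)
  moreover have "v \<noteq> 0" using False by (simp add: v_def veq2)
  ultimately show ?thesis by blast
qed


lemma norm_two: assumes "cr v1 v2 \<noteq> 0"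
  shows "\<exists>P. det P = 1 \<and> (P *v v1)$2 = 0 \<and> (P *v v2)$1 = 0"
proof -
  define d where "d = cr v1 v2"
  define Q :: cmat2 where "Q = vector [vector [v1$1, v2$1/d], vector [v1$2, v2$2/d]]"
  have "det Q = cr v1 v2 / d" unfolding Q_def by (simp add: det_2 cr_def diff_divide_distrib)
  then have dQ: "det Q = 1" using assms d_def by simp
  have d: "d \<noteq> 0" using assms d_def by simp
  have "(adj2 Q *v v1)$2 = 0" by (simp add: m2s Q_def algebra_simps)
  moreover have "(adj2 Q *v v2)$1 = 0" using d by (simp add: m2s Q_def field_simps)
  ultimately show ?thesis using dQ det_adj2 by metis
qed

lemma norm_one: fixes v :: "complex^2" assumes "v \<noteq> 0"
  shows "\<exists>P. det P = 1 \<and> (P *v v)$2 = 0" "\<exists>P. det P = 1 \<and> (P *v v)$1 = 0"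
proof -
  have "v$1 \<noteq> 0 \<or> v$2 \<noteq> 0" using assms by (simp add: veq2)
  then have "\<exists>w. cr v w \<noteq> 0 \<and> cr w v \<noteq> 0"
  proof
    assume "v$1 \<noteq> 0" then show ?thesis by (intro exI[of _ "vector [0,1]"]) (simp add: cr_def)
  next
    assume "v$2 \<noteq> 0" then show ?thesis by (intro exI[of _ "vector [1,0]"]) (simp add: cr_def)
  qed
  then show "\<exists>P. det P = 1 \<and> (P *v v)$2 = 0" "\<exists>P. det P = 1 \<and> (P *v v)$1 = 0"
    using norm_two by blast+
qed




lemma pair_trace_id:
  fixes X Y :: cmat2
  assumes "X$2$1 = 0"
  shows "trace (X ** Y ** adj2 X ** adj2 Y) = 2 * det X * det Y +
     Y$2$1 * ((X$1$2)^2 * Y$2$1 - (X$1$1 - X$2$2)^2 * Y$1$2 - (X$1$1 - X$2$2) * X$1$2 * (Y$2$2 - Y$1$1))"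
  by (simp add: m2s assms, algebra)

lemma pair_cr_id:
  fixes Y :: cmat2
  shows "cr (Y *v vector [b, -c]) (vector [b, -c]) = - (b^2 * Y$2$1 - c^2 * Y$1$2 - c * b * (Y$2$2 - Y$1$1))"
  by (simp add: m2s) algebra

lemma ut_eig: fixes X :: cmat2 assumes "X$2$1 = 0" shows "eig X (vector [X$1$2, X$2$2 - X$1$1])"
proof -
  have "cr (X *v vector [X$1$2, X$2$2 - X$1$1]) (vector [X$1$2, X$2$2 - X$1$1]) = 0"
    unfolding cr_def mv2 by (simp add: assms algebra_simps)
  then show ?thesis by (simp add: eig_def)
qed

lemma diag_eig: fixes M :: cmat2 shows "M$2$1 = 0 \<Longrightarrow> M$1$2 = 0 \<Longrightarrow> M$1$1 = M$2$2 \<Longrightarrow> eig M z"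
  by (simp add: m2s algebra_simps)

lemma diag_eig_rev: fixes M :: cmat2
  assumes "M$2$1 = 0" "M$1$2 = 0" "eig M w" "w$1 \<noteq> 0" "w$2 \<noteq> 0" shows "M$1$1 = M$2$2"
proof -
  have "(M$1$1 - M$2$2) * (w$1 * w$2) = 0" using assms(3) by (simp add: m2s assms(1,2) algebra_simps)
  then show ?thesis using assms(4,5) by simp
qed

lemma tri3_id: fixes X Y Z :: cmat2
  assumes "X$2$1 = 0" "X$1$2 = 0" "Y$2$1 = 0" "Z$1$2 = 0"
  shows "trace (X ** Y ** Z) - trace (Z ** Y ** X) = (X$1$1 - X$2$2) * Y$1$2 * Z$2$1"
  by (simp add: m2s assms, algebra)

lemma ut_trace3: fixes X Y Z :: cmat2
  assumes "X$2$1 = 0" "Y$2$1 = 0" "Z$2$1 = 0"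
  shows "trace (X ** Y ** Z) = trace (Z ** Y ** X)"
  by (simp add: m2s assms algebra_simps)




lemma pair_norm:
  fixes X Y :: cmat2
  assumes X21: "X$2$1 = 0" and dX: "det X = 1" and dY: "det Y = 1"
    and tr: "trace (X ** Y ** adj2 X ** adj2 Y) = 2"
  shows "\<exists>w. w \<noteq> 0 \<and> eig X w \<and> eig Y w"
proof (cases "Y$2$1 = 0")
  case True
  have "eig X (vector [1,0])" "eig Y (vector [1,0])" using X21 True by (simp_all add: eig_def cr_def mv2)
  moreover have "(vector [1,0] :: complex^2) \<noteq> 0" by (simp add: veq2)
  ultimately show ?thesis by blast
next
  case False
  define b where "b = X$1$2"
  define c where "c = X$1$1 - X$2$2"
  define K where "K = b^2 * Y$2$1 - c^2 * Y$1$2 - c * b * (Y$2$2 - Y$1$1)"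
  have "Y$2$1 * K = 0" using pair_trace_id[OF X21, of Y] tr dX dY unfolding K_def b_def c_def by simp
  then have K: "K = 0" using False by simp
  show ?thesis
  proof (cases "c = 0")
    case True
    then have "b^2 * Y$2$1 = 0" using K unfolding K_def by simp
    then have b: "b = 0" using False by simp
    obtain w where w: "w \<noteq> 0" "eig Y w" using exists_eig by blast
    have "eig X w" using diag_eig[OF X21] b True unfolding b_def c_def by simp
    then show ?thesis using w by blast
  next
    case False
    define w :: "complex^2" where "w = vector [b, -c]"
    have "w \<noteq> 0" using False by (simp add: w_def veq2)
    moreover have "eig Y w" using pair_cr_id[of Y b c] K unfolding w_def K_def eig_def by simp
    moreover have "eig X w" using ut_eig[OF X21] unfolding w_def b_def c_def by simp
    ultimately show ?thesis by blast
  qed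
qed

lemma pair_red:
  fixes X Y :: cmat2
  assumes dX: "det X = 1" and dY: "det Y = 1" and tr: "trace (X ** Y ** adj2 X ** adj2 Y) = 2"
  shows "\<exists>v. v \<noteq> 0 \<and> eig X v \<and> eig Y v"
proof -
  obtain u where u: "u \<noteq> 0" "eig X u" using exists_eig by blast
  obtain P where P: "det P = 1" "(P *v u)$2 = 0" using norm_one(1)[OF u(1)] by blast
  have X': "(cj P X)$2$1 = 0"
    using eig_e1[OF P(2) Pv_nz[OF P(1) u(1)], of "cj P X"] cj_eig[OF P(1)] u(2) by simp
  have "trace (cj P X ** cj P Y ** adj2 (cj P X) ** adj2 (cj P Y)) = 2"
    using tr by (simp add: cj_mult[OF P(1), symmetric] cj_adj[symmetric] cj_trace[OF P(1)])
  then obtain w where w: "w \<noteq> 0" "eig (cj P X) w" "eig (cj P Y) w"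
    using pair_norm[OF X'] cj_det[OF P(1)] dX dY by metis
  define v where "v = adj2 P *v w"
  have Pv: "P *v v = w" unfolding v_def using adj_P_v[OF P(1)] .
  have "v \<noteq> 0" using w(1) Pv by auto
  moreover have "eig X v" "eig Y v" using w cj_eig[OF P(1)] Pv by metis+
  ultimately show ?thesis by blast
qed

lemma triple_core:
  fixes X Y Z :: cmat2
  assumes v1: "v1 \<noteq> 0" and v2: "v2 \<noteq> 0" and X1: "eig X v1" and X2: "eig X v2"
    and Y1: "eig Y v1" and Y2: "\<not> eig Y v2" and Z2: "eig Z v2" and Z1: "\<not> eig Z v1"
    and Xw: "\<not> eig X w"
  shows "trace (X ** Y ** Z) \<noteq> trace (Z ** Y ** X)"
proof -
  have c: "cr v1 v2 \<noteq> 0" using eig_par[OF v1 v2 _ Y1] Y2 by blast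
  obtain P where P: "det P = 1" "(P *v v1)$2 = 0" "(P *v v2)$1 = 0" using norm_two[OF c] by blast
  have n1: "P *v v1 \<noteq> 0" and n2: "P *v v2 \<noteq> 0" using Pv_nz P(1) v1 v2 by auto
  note e1 = eig_e1[OF P(2) n1] and e2 = eig_e2[OF P(3) n2] and ce = cj_eig[OF P(1)]
  have x21: "(cj P X)$2$1 = 0" using e1[of "cj P X"] ce X1 by simp
  have x12: "(cj P X)$1$2 = 0" using e2[of "cj P X"] ce X2 by simp
  have y21: "(cj P Y)$2$1 = 0" using e1[of "cj P Y"] ce Y1 by simp
  have y12: "(cj P Y)$1$2 \<noteq> 0" using e2[of "cj P Y"] ce Y2 by simp
  have z12: "(cj P Z)$1$2 = 0" using e2[of "cj P Z"] ce Z2 by simp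
  have z21: "(cj P Z)$2$1 \<noteq> 0" using e1[of "cj P Z"] ce Z1 by simp
  have xd: "(cj P X)$1$1 \<noteq> (cj P X)$2$2"
  proof
    assume h: "(cj P X)$1$1 = (cj P X)$2$2"
    have "eig (cj P X) (P *v w)" using diag_eig[OF x21 x12 h] .
    then show False using ce Xw by simp
  qed
  have "trace (cj P X ** cj P Y ** cj P Z) - trace (cj P Z ** cj P Y ** cj P X)
        = ((cj P X)$1$1 - (cj P X)$2$2) * (cj P Y)$1$2 * (cj P Z)$2$1"
    using tri3_id[OF x21 x12 y21 z12] .
  moreover have "trace (cj P X ** cj P Y ** cj P Z) = trace (X ** Y ** Z)"
    "trace (cj P Z ** cj P Y ** cj P X) = trace (Z ** Y ** X)"
    by (simp_all add: cj_mult[OF P(1), symmetric] cj_trace[OF P(1)])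
  ultimately show ?thesis using xd y12 z21 by auto
qed

lemma cr_nz: "cr u v \<noteq> 0 \<Longrightarrow> u \<noteq> 0 \<and> v \<noteq> 0"
  by (auto simp: cr_def)

lemma three_lines:
  fixes M :: cmat2
  assumes "eig M u" "eig M v" "eig M w" "cr u v \<noteq> 0" "cr u w \<noteq> 0" "cr v w \<noteq> 0"
  shows "eig M z"
proof -
  obtain P where P: "det P = 1" "(P *v u)$2 = 0" "(P *v v)$1 = 0" using norm_two[OF assms(4)] by blast
  have n1: "P *v u \<noteq> 0" and n2: "P *v v \<noteq> 0" using Pv_nz P(1) cr_nz[OF assms(4)] by auto
  note ce = cj_eig[OF P(1)]
  have m21: "(cj P M)$2$1 = 0" using eig_e1[OF P(2) n1, of "cj P M"] ce assms(1) by simp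
  have m12: "(cj P M)$1$2 = 0" using eig_e2[OF P(3) n2, of "cj P M"] ce assms(2) by simp
  have "cr (P *v u) (P *v w) \<noteq> 0" "cr (P *v v) (P *v w) \<noteq> 0" using cr_P P(1) assms(5,6) by auto
  then have a: "(P *v w)$1 \<noteq> 0" and b: "(P *v w)$2 \<noteq> 0" using P(2,3) by (auto simp: cr_def)
  have "eig (cj P M) (P *v w)" using ce assms(3) by simp
  then have "(cj P M)$1$1 = (cj P M)$2$2" using diag_eig_rev[OF m21 m12 _ a b] by simp
  then have "eig (cj P M) (P *v z)" using diag_eig[OF m21 m12] by simp
  then show ?thesis using ce by simp
qed

lemma sig0:
  fixes X Y :: cmat2
  assumes dX: "det X = 1" and dY: "det Y = 1" and v: "v \<noteq> 0" "eig X v" "eig Y v"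
  shows "trace (X ** Y ** adj2 X ** adj2 Y) = 2"
proof -
  obtain P where P: "det P = 1" "(P *v v)$2 = 0" using norm_one(1)[OF v(1)] by blast
  note e1 = eig_e1[OF P(2) Pv_nz[OF P(1) v(1)]] and ce = cj_eig[OF P(1)]
  have x: "(cj P X)$2$1 = 0" using e1[of "cj P X"] ce v by simp
  have y: "(cj P Y)$2$1 = 0" using e1[of "cj P Y"] ce v by simp
  have "trace (cj P X ** cj P Y ** adj2 (cj P X) ** adj2 (cj P Y)) = 2 * det (cj P X) * det (cj P Y)"
    using pair_trace_id[OF x, of "cj P Y"] y by simp
  then show ?thesis
    by (simp add: cj_mult[OF P(1), symmetric] cj_adj[symmetric] cj_trace[OF P(1)] cj_det[OF P(1)] dX dY)
qed

lemma del0: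
  fixes X Y Z :: cmat2
  assumes v: "v \<noteq> 0" "eig X v" "eig Y v" "eig Z v"
  shows "trace (X ** Y ** Z) = trace (Z ** Y ** X)"
proof -
  obtain P where P: "det P = 1" "(P *v v)$2 = 0" using norm_one(1)[OF v(1)] by blast
  note e1 = eig_e1[OF P(2) Pv_nz[OF P(1) v(1)]] and ce = cj_eig[OF P(1)]
  have x: "(cj P X)$2$1 = 0" using e1[of "cj P X"] ce v by simp
  have y: "(cj P Y)$2$1 = 0" using e1[of "cj P Y"] ce v by simp
  have z: "(cj P Z)$2$1 = 0" using e1[of "cj P Z"] ce v by simp
  have "trace (cj P X ** cj P Y ** cj P Z) = trace (cj P Z ** cj P Y ** cj P X)"
    using ut_trace3[OF x y z] .
  then show ?thesis by (simp add: cj_mult[OF P(1), symmetric] cj_trace[OF P(1)])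
qed




definition red :: "cmat2^'n \<Rightarrow> bool" where
  "red A \<longleftrightarrow> (\<exists>v. v \<noteq> 0 \<and> (\<forall>i. eig (A$i) v))"

lemma forall_triple: "(\<forall>i::3. P (triple X Y Z $ i)) \<longleftrightarrow> P X \<and> P Y \<and> P Z"
  by (auto simp add: forall_3 triple_def)

lemma red_triple: "red (triple X Y Z) \<longleftrightarrow> (\<exists>v. v \<noteq> 0 \<and> eig X v \<and> eig Y v \<and> eig Z v)"
  unfolding red_def using forall_triple[of "\<lambda>M. eig M _" X Y Z] by simp

lemma cr_swap: "cr u v = - cr v u" by (simp add: cr_def)

lemma e1_nz: "(vector [1,0] :: complex^2) \<noteq> 0" by (simp add: veq2)

lemma red_tuple_triples:
  fixes A :: "cmat2^'n"
  assumes nr: "\<not> red A"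
  shows "\<exists>j k l. \<not> red (triple (A$j) (A$k) (A$l))"
proof (rule ccontr)
  assume "\<not> ?thesis"
  then have H: "\<And>j k l. \<exists>v. v \<noteq> 0 \<and> eig (A$j) v \<and> eig (A$k) v \<and> eig (A$l) v"
    using red_triple by blast
  have nr': "\<And>v. v \<noteq> 0 \<Longrightarrow> \<exists>i. \<not> eig (A$i) v" using nr unfolding red_def by blast
  obtain j z where jz: "\<not> eig (A$j) z" using nr'[OF e1_nz] by blast
  obtain v1 where v1: "v1 \<noteq> 0" "eig (A$j) v1" using H[of j j j] by blast
  obtain k where k: "\<not> eig (A$k) v1" using nr'[OF v1(1)] by blast
  obtain v2 where v2: "v2 \<noteq> 0" "eig (A$j) v2" "eig (A$k) v2" using H[of j k k] by blast
  obtain l where l: "\<not> eig (A$l) v2" using nr'[OF v2(1)] by blast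
  obtain v3 where v3: "v3 \<noteq> 0" "eig (A$j) v3" "eig (A$k) v3" "eig (A$l) v3" using H[of j k l] by blast
  have c12: "cr v1 v2 \<noteq> 0"
  proof
    assume "cr v1 v2 = 0" then have "cr v2 v1 = 0" using cr_swap[of v2 v1] by simp
    then show False using eig_par[OF v2(1) v1(1) _ v2(3)] k by blast
  qed
  have c13: "cr v1 v3 \<noteq> 0"
  proof
    assume "cr v1 v3 = 0" then have "cr v3 v1 = 0" using cr_swap[of v3 v1] by simp
    then show False using eig_par[OF v3(1) v1(1) _ v3(3)] k by blast
  qed
  have c23: "cr v2 v3 \<noteq> 0"
  proof
    assume "cr v2 v3 = 0" then have "cr v3 v2 = 0" using cr_swap[of v3 v2] by simp
    then show False using eig_par[OF v3(1) v2(1) _ v3(4)] l by blast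
  qed
  show False using three_lines[OF v1(2) v2(2) v3(2) c12 c13 c23] jz by blast
qed

lemma red_triple_of: "red A \<Longrightarrow> red (triple (A$j) (A$k) (A$l))"
  unfolding red_triple by (auto simp: red_def)

lemma sigma_conv: "det (A$j) = 1 \<Longrightarrow> det (A$k) = 1 \<Longrightarrow>
   Defs.sigma A j k = trace (A$j ** A$k ** adj2 (A$j) ** adj2 (A$k)) - 2"
  by (simp add: sigma_def inv_SL)

lemma P5:
  fixes A :: "cmat2^'n"
  assumes dets: "\<And>i. det (A$i) = 1"
  shows "\<not> red A \<longleftrightarrow> (\<exists>j k l. Defs.sigma A j k \<noteq> 0 \<or> Delta A j k l \<noteq> 0)"
proof
  assume "\<exists>j k l. Defs.sigma A j k \<noteq> 0 \<or> Delta A j k l \<noteq> 0"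
  then obtain j k l where jkl: "Defs.sigma A j k \<noteq> 0 \<or> Delta A j k l \<noteq> 0" by blast
  show "\<not> red A"
  proof
    assume "red A"
    then obtain v where v: "v \<noteq> 0" "\<And>i. eig (A$i) v" unfolding red_def by blast
    have "Defs.sigma A j k = 0" using sig0[OF dets dets v(1) v(2) v(2)] sigma_conv[OF dets dets] by simp
    moreover have "Delta A j k l = 0" using del0[OF v(1) v(2) v(2) v(2)] by (simp add: Delta_def)
    ultimately show False using jkl by simp
  qed
next
  assume "\<not> red A"
  then obtain j k l where nt: "\<not> red (triple (A$j) (A$k) (A$l))" using red_tuple_triples by blast
  then have nc: "\<And>v. v \<noteq> 0 \<Longrightarrow> eig (A$j) v \<Longrightarrow> eig (A$k) v \<Longrightarrow> eig (A$l) v \<Longrightarrow> False"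
    unfolding red_triple by blast
  have sig: "Defs.sigma A a b \<noteq> 0" if "\<not> (\<exists>v. v \<noteq> 0 \<and> eig (A$a) v \<and> eig (A$b) v)" for a b
  proof
    assume "Defs.sigma A a b = 0"
    then have "trace (A$a ** A$b ** adj2 (A$a) ** adj2 (A$b)) = 2" using sigma_conv[OF dets dets] by simp
    then show False using pair_red[OF dets dets] that by blast
  qed
  show "\<exists>j k l. Defs.sigma A j k \<noteq> 0 \<or> Delta A j k l \<noteq> 0"
  proof (cases "\<exists>v. v \<noteq> 0 \<and> eig (A$j) v \<and> eig (A$k) v")
    case False then show ?thesis using sig by blast
  next
    case True
    then obtain v1 where v1: "v1 \<noteq> 0" "eig (A$j) v1" "eig (A$k) v1" by blast
    show ?thesis
    proof (cases "\<exists>v. v \<noteq> 0 \<and> eig (A$j) v \<and> eig (A$l) v")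
      case False then show ?thesis using sig by blast
    next
      case True
      then obtain v2 where v2: "v2 \<noteq> 0" "eig (A$j) v2" "eig (A$l) v2" by blast
      show ?thesis
      proof (cases "\<exists>v. v \<noteq> 0 \<and> eig (A$k) v \<and> eig (A$l) v")
        case False then show ?thesis using sig by blast
      next
        case True
        then obtain v3 where v3: "v3 \<noteq> 0" "eig (A$k) v3" "eig (A$l) v3" by blast
        have "\<not> eig (A$l) v1" using nc v1 by blast
        moreover have "\<not> eig (A$k) v2" using nc v2 by blast
        moreover have "\<not> eig (A$j) v3" using nc v3 by blast
        ultimately have "trace (A$j ** A$k ** A$l) \<noteq> trace (A$l ** A$k ** A$j)"
          using triple_core[OF v1(1) v2(1) v1(2) v2(2) v1(3) _ v2(3)] by blast
        then have "Delta A j k l \<noteq> 0" by (simp add: Delta_def)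
        then show ?thesis by blast
      qed
    qed
  qed
qed




lemma eig_scal: "M *v v = c *s v \<Longrightarrow> eig M v"
  by (simp add: m2s algebra_simps)

lemma e2_nz: "(vector [0,1] :: complex^2) \<noteq> 0" by (simp add: veq2)

lemma cramer2: assumes "cr u v \<noteq> 0"
  shows "z = (cr z v / cr u v) *s u + (cr u z / cr u v) *s v"
proof -
  have i1: "cr z v * u$1 + cr u z * v$1 = cr u v * z$1" by (simp add: cr_def algebra_simps)
  have i2: "cr z v * u$2 + cr u z * v$2 = cr u v * z$2" by (simp add: cr_def algebra_simps)
  have "z$1 = (cr z v / cr u v) * u$1 + (cr u z / cr u v) * v$1"
    using i1 assms by (simp add: field_simps)
  moreover have "z$2 = (cr z v / cr u v) * u$2 + (cr u z / cr u v) * v$2"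
    using i2 assms by (simp add: field_simps)
  ultimately show ?thesis by (simp add: veq2)
qed

lemma other_vec: fixes v :: "complex^2" assumes "v \<noteq> 0" shows "\<exists>w. cr v w \<noteq> 0"
proof -
  have "v$1 \<noteq> 0 \<or> v$2 \<noteq> 0" using assms by (simp add: veq2)
  then show ?thesis
  proof
    assume "v$1 \<noteq> 0" then show ?thesis by (intro exI[of _ "vector [0,1]"]) (simp add: cr_def)
  next
    assume "v$2 \<noteq> 0" then show ?thesis by (intro exI[of _ "vector [1,0]"]) (simp add: cr_def)
  qed
qed

lemma rho_facts:
  fixes \<Gamma> :: "('g, 'b) monoid_scheme" and \<rho> :: "'g \<Rightarrow> cmat2"
  assumes grp: "group \<Gamma>" and hom: "\<rho> \<in> hom \<Gamma> SL2_group"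
  shows rho_det: "\<And>x. x \<in> carrier \<Gamma> \<Longrightarrow> det (\<rho> x) = 1"
    and rho_mult: "\<And>x y. x \<in> carrier \<Gamma> \<Longrightarrow> y \<in> carrier \<Gamma> \<Longrightarrow> \<rho> (x \<otimes>\<^bsub>\<Gamma>\<^esub> y) = \<rho> x ** \<rho> y"
    and rho_one: "\<rho> \<one>\<^bsub>\<Gamma>\<^esub> = mat 1"
    and rho_inv: "\<And>x. x \<in> carrier \<Gamma> \<Longrightarrow> \<rho> (inv\<^bsub>\<Gamma>\<^esub> x) = adj2 (\<rho> x)"
proof -
  show d: "\<And>x. x \<in> carrier \<Gamma> \<Longrightarrow> det (\<rho> x) = 1"
    using hom unfolding hom_def SL2_group_def SL2_def by auto
  show m: "\<And>x y. x \<in> carrier \<Gamma> \<Longrightarrow> y \<in> carrier \<Gamma> \<Longrightarrow> \<rho> (x \<otimes>\<^bsub>\<Gamma>\<^esub> y) = \<rho> x ** \<rho> y"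
    using hom unfolding hom_def SL2_group_def by auto
  have one: "\<one>\<^bsub>\<Gamma>\<^esub> \<in> carrier \<Gamma>" using grp by (simp add: group.is_monoid monoid.one_closed)
  have "\<rho> \<one>\<^bsub>\<Gamma>\<^esub> = \<rho> (\<one>\<^bsub>\<Gamma>\<^esub> \<otimes>\<^bsub>\<Gamma>\<^esub> \<one>\<^bsub>\<Gamma>\<^esub>)"
    using grp one by (simp add: group.is_monoid monoid.l_one)
  also have "\<dots> = \<rho> \<one>\<^bsub>\<Gamma>\<^esub> ** \<rho> \<one>\<^bsub>\<Gamma>\<^esub>" using m one by simp
  finally have e: "\<rho> \<one>\<^bsub>\<Gamma>\<^esub> = \<rho> \<one>\<^bsub>\<Gamma>\<^esub> ** \<rho> \<one>\<^bsub>\<Gamma>\<^esub>" .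
  have "mat 1 = adj2 (\<rho> \<one>\<^bsub>\<Gamma>\<^esub>) ** \<rho> \<one>\<^bsub>\<Gamma>\<^esub>" using adj2_left d one by simp
  also have "\<dots> = adj2 (\<rho> \<one>\<^bsub>\<Gamma>\<^esub>) ** \<rho> \<one>\<^bsub>\<Gamma>\<^esub> ** \<rho> \<one>\<^bsub>\<Gamma>\<^esub>"
    using e by (metis matrix_mul_assoc)
  also have "\<dots> = \<rho> \<one>\<^bsub>\<Gamma>\<^esub>" using adj2_left d one by (simp add: matrix_mul_lid)
  finally show o: "\<rho> \<one>\<^bsub>\<Gamma>\<^esub> = mat 1" by simp
  fix x assume x: "x \<in> carrier \<Gamma>"
  have ix: "inv\<^bsub>\<Gamma>\<^esub> x \<in> carrier \<Gamma>" using grp x by simp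
  have "\<rho> (inv\<^bsub>\<Gamma>\<^esub> x) ** \<rho> x = mat 1"
    using m[OF ix x] o group.l_inv[OF grp x] by simp
  then have "\<rho> (inv\<^bsub>\<Gamma>\<^esub> x) ** \<rho> x ** adj2 (\<rho> x) = adj2 (\<rho> x)" by (simp add: matrix_mul_lid)
  then show "\<rho> (inv\<^bsub>\<Gamma>\<^esub> x) = adj2 (\<rho> x)"
    using adj2_right[OF d[OF x]] by (metis matrix_mul_assoc matrix_mul_rid)
qed

lemma P1:
  fixes \<Gamma> :: "('g, 'b) monoid_scheme" and \<epsilon> :: "'n::finite \<Rightarrow> 'g" and \<rho> :: "'g \<Rightarrow> cmat2"
    and A :: "cmat2^'n"
  assumes grp: "group \<Gamma>" and eps: "\<And>i. \<epsilon> i \<in> carrier \<Gamma>"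
    and gen: "generate \<Gamma> (range \<epsilon>) = carrier \<Gamma>" and hom: "\<rho> \<in> hom \<Gamma> SL2_group"
    and A: "A = (\<chi> i. \<rho> (\<epsilon> i))"
  shows "irreducible_rep \<Gamma> \<rho> \<longleftrightarrow> \<not> red A"
proof
  assume irr: "irreducible_rep \<Gamma> \<rho>"
  show "\<not> red A"
  proof
    assume "red A"
    then obtain v where v: "v \<noteq> 0" "\<And>i. eig (\<rho> (\<epsilon> i)) v" unfolding red_def A by auto
    have sub: "range \<epsilon> \<subseteq> carrier \<Gamma>" using eps by auto
    have all: "eig (\<rho> x) v" if "x \<in> generate \<Gamma> (range \<epsilon>)" for x
      using that
    proof (induction rule: generate.induct)
      case one then show ?case using rho_one[OF grp hom] by (simp add: eig_one)
    next
      case (incl h) then show ?case using v by auto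
    next
      case (inv h) then show ?case using v rho_inv[OF grp hom] eps eig_adj by auto
    next
      case (eng h1 h2)
      have "h1 \<in> carrier \<Gamma>" "h2 \<in> carrier \<Gamma>"
        using eng.hyps group.generate_in_carrier[OF grp sub] by auto
      then show ?case using rho_mult[OF grp hom] eig_mult[OF v(1) eng.IH] by simp
    qed
    define V where "V = range (\<lambda>c. c *s v)"
    have "vec.subspace V"
      unfolding vec.subspace_def V_def
    proof (intro conjI ballI allI)
      show "0 \<in> range (\<lambda>c. c *s v)" by (rule range_eqI[of _ _ 0]) simp
    next
      fix x y assume "x \<in> range (\<lambda>c. c *s v)" "y \<in> range (\<lambda>c. c *s v)"
      then obtain a b where "x = a *s v" "y = b *s v" by auto
      then show "x + y \<in> range (\<lambda>c. c *s v)" by (auto intro: range_eqI[of _ _ "a+b"] simp: vector_sadd_rdistrib)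
    next
      fix c x assume "x \<in> range (\<lambda>c. c *s v)"
      then obtain a where "x = a *s v" by auto
      then show "c *s x \<in> range (\<lambda>c. c *s v)" by (auto intro: range_eqI[of _ _ "c*a"] simp: vector_smult_assoc)
    qed
    moreover have "v \<in> V" unfolding V_def by (rule range_eqI[of _ _ 1]) simp
    then have "V \<noteq> {0}" using v(1) by auto
    moreover have "V \<noteq> UNIV"
    proof
      assume "V = UNIV"
      obtain w where w: "cr v w \<noteq> 0" using other_vec[OF v(1)] by blast
      have "w \<in> V" using \<open>V = UNIV\<close> by simp
      then obtain c where "w = c *s v" unfolding V_def by auto
      then show False using w by (simp add: cr_def algebra_simps)
    qed
    moreover have "\<forall>x\<in>carrier \<Gamma>. \<forall>u\<in>V. \<rho> x *v u \<in> V"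
    proof (intro ballI)
      fix x u assume x: "x \<in> carrier \<Gamma>" and u: "u \<in> V"
      obtain a where a: "u = a *s v" using u unfolding V_def by auto
      obtain c where c: "\<rho> x *v v = c *s v" using all[of x] x gen eig_ex[OF v(1)] by auto
      have "\<rho> x *v u = (a * c) *s v" by (simp add: a vector_scalar_commute c vector_smult_assoc mult.commute)
      then show "\<rho> x *v u \<in> V" unfolding V_def by (auto intro: range_eqI[of _ _ "a*c"])
    qed
    ultimately show False using irr unfolding irreducible_rep_def by blast
  qed
next
  assume nr: "\<not> red A"
  show "irreducible_rep \<Gamma> \<rho>"
    unfolding irreducible_rep_def
  proof
    assume "\<exists>V :: (complex^2) set. vec.subspace V \<and> V \<noteq> {0} \<and> V \<noteq> UNIV \<and>
          (\<forall>x\<in>carrier \<Gamma>. \<forall>v\<in>V. \<rho> x *v v \<in> V)"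
    then obtain V :: "(complex^2) set" where V: "vec.subspace V" "V \<noteq> {0}" "V \<noteq> UNIV"
      "\<forall>x\<in>carrier \<Gamma>. \<forall>v\<in>V. \<rho> x *v v \<in> V" by blast
    have "0 \<in> V" using V(1) vec.subspace_0 by blast
    then obtain v where v: "v \<in> V" "v \<noteq> 0" using V(2) by blast
    have line: "cr u v = 0" if "u \<in> V" for u
    proof (rule ccontr)
      assume c: "cr u v \<noteq> 0"
      have "z \<in> V" for z
        using cramer2[OF c, of z] vec.subspace_add[OF V(1)] vec.subspace_scale[OF V(1)] that v(1)
        by metis
      then show False using V(3) by auto
    qed
    have "eig (A$i) v" for i
      using line[of "\<rho> (\<epsilon> i) *v v"] V(4) eps v(1) unfolding A eig_def by simp
    then show False using nr v(2) unfolding red_def by blast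
  qed
qed

lemma P2:
  fixes A :: "cmat2^'n"
  shows "similar_upper_triangular A \<longleftrightarrow> red A"
proof
  assume "similar_upper_triangular A"
  then obtain P :: cmat2 where P: "invertible P" "\<And>i. (P ** A$i ** matrix_inv P)$1$2 = 0"
    unfolding similar_upper_triangular_def ut2 by blast
  define Q where "Q = matrix_inv P"
  have PQ: "P ** Q = mat 1" and QP: "Q ** P = mat 1" using inv_gen[OF P(1)] unfolding Q_def by auto
  define e2 :: "complex^2" where "e2 = vector [0,1]"
  define v where "v = Q *v e2"
  have "P *v v = e2" unfolding v_def by (simp add: matrix_vector_mul_assoc PQ)
  then have vnz: "v \<noteq> 0" using e2_nz unfolding e2_def by auto
  have "eig (A$i) v" for i
  proof -
    define T where "T = P ** A$i ** Q"
    have T12: "T$1$2 = 0" using P(2) unfolding T_def Q_def by simp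
    have QT: "Q ** T = A$i ** Q" unfolding T_def
      by (metis QP matrix_mul_assoc matrix_mul_lid)
    have Te: "T *v e2 = T$2$2 *s e2" unfolding e2_def by (simp add: veq2 mv2 T12)
    have "A$i *v v = Q *v (T *v e2)" unfolding v_def
      by (simp add: matrix_vector_mul_assoc QT)
    also have "\<dots> = T$2$2 *s v" unfolding Te v_def by (simp add: vector_scalar_commute)
    finally show ?thesis by (rule eig_scal)
  qed
  then show "red A" using vnz unfolding red_def by blast
next
  assume "red A"
  then obtain v where v: "v \<noteq> 0" "\<And>i. eig (A$i) v" unfolding red_def by blast
  obtain P where P: "det P = 1" "(P *v v)$1 = 0" using norm_one(2)[OF v(1)] by blast
  have inv: "invertible P" using P(1) by (simp add: invertible_det_nz)
  have "(P ** A$i ** matrix_inv P)$1$2 = 0" for i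
  proof -
    have "eig (cj P (A$i)) (P *v v)" using cj_eig[OF P(1)] v(2) by simp
    then have "(cj P (A$i))$1$2 = 0" using eig_e2[OF P(2) Pv_nz[OF P(1) v(1)]] by simp
    then show ?thesis unfolding cj_def inv_SL[OF P(1)] .
  qed
  then show "similar_upper_triangular A" unfolding similar_upper_triangular_def ut2 using inv by blast
qed




lemma SL2_tuples_iff: "A \<in> SL2_tuples \<longleftrightarrow> (\<forall>i. det (A$i) = 1)"
  by (simp add: SL2_tuples_def SL2_def)

lemma conj_SL: "det g = 1 \<Longrightarrow> conj_act g A = (\<chi> i. cj g (A$i))"
  by (simp add: conj_act_def inv_SL cj_def)

lemma T_mm: fixes f g :: "'a \<Rightarrow> cmat2"
  assumes "(f \<longlongrightarrow> a) F" "(g \<longlongrightarrow> b) F" shows "((\<lambda>x. f x ** g x) \<longlongrightarrow> a ** b) F"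
  apply (rule vec_tendstoI)+
  apply (simp only: mm2)
  apply (intro tendsto_intros assms)
  done

lemma T_adj: fixes f :: "'a \<Rightarrow> cmat2"
  assumes "(f \<longlongrightarrow> a) F" shows "((\<lambda>x. adj2 (f x)) \<longlongrightarrow> adj2 a) F"
  apply (intro vec_tendstoI)
  subgoal for i j
  proof -
    have "i = 1 \<or> i = 2" "j = 1 \<or> j = 2" by (rule exhaust_2)+
    then show ?thesis by (elim disjE; simp; intro tendsto_intros assms)
  qed
  done

lemma T_det: fixes f :: "'a \<Rightarrow> cmat2"
  assumes "(f \<longlongrightarrow> a) F" shows "((\<lambda>x. det (f x)) \<longlongrightarrow> det a) F"
  by (simp add: det_2, intro tendsto_intros assms)

lemma T_F: fixes f :: "'a \<Rightarrow> cmat2"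
  assumes "(f \<longlongrightarrow> a) F" shows "((\<lambda>x. \<chi> i. cj (f x) (A$i)) \<longlongrightarrow> (\<chi> i. cj a (A$i))) F"
  unfolding cj_def by (intro tendsto_vec_lambda T_mm T_adj assms tendsto_const)

lemma closed_SL2: "closed SL2"
  unfolding closed_sequential_limits SL2_def
proof (intro allI impI)
  fix x :: "nat \<Rightarrow> cmat2" and l assume h: "(\<forall>n. x n \<in> {M. det M = 1}) \<and> x \<longlonglongrightarrow> l"
  then have "(\<lambda>n. det (x n)) \<longlonglongrightarrow> det l" using T_det by blast
  moreover have "(\<lambda>n. det (x n)) = (\<lambda>n. 1)" using h by auto
  ultimately have "det l = 1" using tendsto_unique[OF trivial_limit_sequentially] tendsto_const by metis
  then show "l \<in> {M. det M = 1}" by simp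
qed

lemma closed_tuples: "closed (SL2_tuples :: (cmat2^'n) set)"
  unfolding closed_sequential_limits
proof (intro allI impI)
  fix x :: "nat \<Rightarrow> cmat2^'n" and l assume h0: "(\<forall>n. x n \<in> SL2_tuples) \<and> x \<longlonglongrightarrow> l"
  then have h: "(\<forall>n. \<forall>i. det (x n $ i) = 1) \<and> x \<longlonglongrightarrow> l" unfolding SL2_tuples_iff by blast
  have "det (l$i) = 1" for i
  proof -
    have "(\<lambda>n. det (x n $ i)) \<longlonglongrightarrow> det (l$i)" using h by (intro T_det tendsto_vec_nth) blast
    moreover have "(\<lambda>n. det (x n $ i)) = (\<lambda>n. 1)" using h by auto
    ultimately show ?thesis using tendsto_unique[OF trivial_limit_sequentially] tendsto_const by metis
  qed
  then show "l \<in> SL2_tuples" unfolding SL2_tuples_iff by simp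
qed

lemma scC: "c *\<^sub>R (z::complex) = complex_of_real c * z" by (simp add: scaleR_conv_of_real)

lemma scaleR_mm: fixes X Y :: cmat2 and c :: real
  shows "(c *\<^sub>R X) ** Y = c *\<^sub>R (X ** Y)" "X ** (c *\<^sub>R Y) = c *\<^sub>R (X ** Y)"
  by (simp_all add: meq2 mm2 vector_scaleR_component scC algebra_simps)

lemma det_scaleR: fixes X :: cmat2 and c :: real shows "det (c *\<^sub>R X) = (complex_of_real c)^2 * det X"
  by (simp add: det_2 vector_scaleR_component scC power2_eq_square algebra_simps)

lemma ker2: fixes h :: cmat2 assumes "h \<noteq> 0" "det h = 0"
  shows "\<exists>v. v \<noteq> 0 \<and> h *v v = 0 \<and> (\<forall>u. h *v u = 0 \<longrightarrow> cr u v = 0)"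
proof (cases "h$1$1 \<noteq> 0 \<or> h$1$2 \<noteq> 0")
  case True
  define v :: "complex^2" where "v = vector [h$1$2, - h$1$1]"
  have "v \<noteq> 0" using True by (auto simp: v_def veq2)
  moreover have "h *v v = 0" using assms(2) by (simp add: v_def veq2 mv2 det_2 algebra_simps)
  moreover have "\<forall>u. h *v u = 0 \<longrightarrow> cr u v = 0"
  proof (intro allI impI)
    fix u assume "h *v u = (0::complex^2)"
    then have "(h *v u)$1 = 0" by simp
    then have "h$1$1*u$1 + h$1$2*u$2 = 0" by (simp add: mv2)
    moreover have "cr u v = -(h$1$1*u$1 + h$1$2*u$2)" by (simp add: v_def cr_def algebra_simps)
    ultimately show "cr u v = 0" by simp
  qed
  ultimately show ?thesis by blast
next
  case False
  then have r2: "h$2$1 \<noteq> 0 \<or> h$2$2 \<noteq> 0" using assms(1) by (auto simp: meq2)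
  define v :: "complex^2" where "v = vector [h$2$2, - h$2$1]"
  have "v \<noteq> 0" using r2 by (auto simp: v_def veq2)
  moreover have "h *v v = 0" using False by (simp add: v_def veq2 mv2 algebra_simps)
  moreover have "\<forall>u. h *v u = 0 \<longrightarrow> cr u v = 0"
  proof (intro allI impI)
    fix u assume "h *v u = (0::complex^2)"
    then have "(h *v u)$2 = 0" by simp
    then have "h$2$1*u$1 + h$2$2*u$2 = 0" by (simp add: mv2)
    moreover have "cr u v = -(h$2$1*u$1 + h$2$2*u$2)" by (simp add: v_def cr_def algebra_simps)
    ultimately show "cr u v = 0" by simp
  qed
  ultimately show ?thesis by blast
qed

lemma cj_right: "det g = 1 \<Longrightarrow> cj g M ** g = g ** M"
  unfolding cj_def by (metis adj2_left matrix_mul_assoc matrix_mul_rid)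



lemma bounded_preimage:
  fixes A :: "cmat2^'n" and K :: "(cmat2^'n) set"
  assumes nr: "\<not> red A" and K: "compact K"
  shows "bounded {g \<in> SL2. (\<chi> i. cj g (A$i)) \<in> K}" (is "bounded ?S")
proof (rule ccontr)
  assume "\<not> bounded ?S"
  then have nb: "\<not> (\<exists>a. \<forall>x\<in>?S. norm x \<le> a)" unfolding bounded_iff by blast
  have "\<exists>g. g \<in> ?S \<and> real n + 1 < norm g" for n :: nat
  proof (rule ccontr)
    assume "\<not> ?thesis"
    then have "\<forall>x\<in>?S. norm x \<le> real n + 1" by (auto simp: not_less)
    then show False using nb by blast
  qed
  then have "\<forall>n::nat. \<exists>g. g \<in> ?S \<and> real n + 1 < norm g" by blast
  then obtain g where g0: "\<forall>n. g n \<in> ?S \<and> real n + 1 < norm (g n)" by (rule choice[THEN exE])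
  then have g: "\<And>n. g n \<in> ?S" "\<And>n. real n + 1 < norm (g n)" by auto
  have gpos: "norm (g n) > 0" for n using g(2)[of n] by linarith
  have dg: "det (g n) = 1" for n using g(1)[of n] by (simp add: SL2_def)
  define h where "h n = (1 / norm (g n)) *\<^sub>R g n" for n
  define B where "B n = (\<chi> i. cj (g n) (A$i))" for n
  have hn: "norm (h n) = 1" for n using gpos[of n] by (simp add: h_def)
  have BK: "B n \<in> K" for n using g(1) unfolding B_def by auto
  have rel: "h n ** A$i = B n $ i ** h n" for n i
  proof -
    have "g n ** A$i = cj (g n) (A$i) ** g n" using cj_right[OF dg] by simp
    then show ?thesis unfolding h_def B_def by (simp add: scaleR_mm)
  qed
  have dh: "det (h n) = complex_of_real (1 / (norm (g n))^2)" for n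
    unfolding h_def det_scaleR dg by (simp add: power_divide)
  have cpt: "compact (sphere (0::cmat2) 1 \<times> K)" using K by (intro compact_Times) auto
  have hb: "\<forall>n. (h n, B n) \<in> sphere 0 1 \<times> K" using hn BK by simp
  obtain l r where l: "l \<in> sphere 0 1 \<times> K" and r: "strict_mono r"
    and lim: "((\<lambda>n. (h n, B n)) \<circ> r) \<longlonglongrightarrow> l"
    by (rule seq_compactE[OF compact_imp_seq_compact[OF cpt] hb])
  define hl where "hl = fst l"
  define Bl where "Bl = snd l"
  have lh: "(\<lambda>n. h (r n)) \<longlonglongrightarrow> hl" unfolding hl_def using tendsto_fst[OF lim] by (simp add: o_def)
  have lB: "(\<lambda>n. B (r n)) \<longlonglongrightarrow> Bl" unfolding Bl_def using tendsto_snd[OF lim] by (simp add: o_def)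
  have hl1: "norm hl = 1" using l unfolding hl_def by auto
  have eq: "hl ** A$i = Bl$i ** hl" for i
  proof -
    have t1: "(\<lambda>n. h (r n) ** A$i) \<longlonglongrightarrow> hl ** A$i" by (intro T_mm lh tendsto_const)
    have t2: "(\<lambda>n. B (r n) $ i ** h (r n)) \<longlonglongrightarrow> Bl$i ** hl" by (intro T_mm lh tendsto_vec_nth lB)
    have "(\<lambda>n. h (r n) ** A$i) = (\<lambda>n. B (r n) $ i ** h (r n))" using rel by auto
    then show ?thesis using tendsto_unique[OF trivial_limit_sequentially t1] t2 by simp
  qed
  have "det hl = 0"
  proof -
    have t1: "(\<lambda>n. det (h (r n))) \<longlonglongrightarrow> det hl" by (intro T_det lh)
    have t2: "(\<lambda>n. det (h (r n))) \<longlonglongrightarrow> 0"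
    proof -
      have le: "1 / (norm (g (r n)))^2 \<le> inverse (real (Suc n))" for n
      proof -
        have "real n \<le> real (r n)" using seq_suble[OF r, of n] by simp
        then have a: "real (Suc n) < norm (g (r n))" using g(2)[of "r n"] by simp
        have "1 \<le> norm (g (r n))" using a by simp
        then have "norm (g (r n)) \<le> (norm (g (r n)))^2" using mult_left_mono[of 1 "norm (g (r n))" "norm (g (r n))"] by (simp add: power2_eq_square)
        then have "real (Suc n) \<le> (norm (g (r n)))^2" using a by linarith
        then show ?thesis unfolding inverse_eq_divide by (intro frac_le) auto
      qed
      have "(\<lambda>n. 1 / (norm (g (r n)))^2) \<longlonglongrightarrow> 0"
        by (rule tendsto_sandwich[OF _ _ tendsto_const LIMSEQ_inverse_real_of_nat])
           (use le in auto)
      then have "(\<lambda>n. complex_of_real (1 / (norm (g (r n)))^2)) \<longlonglongrightarrow> of_real 0"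
        by (intro tendsto_of_real)
      then show ?thesis unfolding dh by simp
    qed
    show ?thesis using tendsto_unique[OF trivial_limit_sequentially t1 t2] .
  qed
  moreover have "hl \<noteq> 0" using hl1 by auto
  ultimately obtain v where v: "v \<noteq> 0" "hl *v v = 0" "\<And>u. hl *v u = 0 \<Longrightarrow> cr u v = 0"
    using ker2 by blast
  have "eig (A$i) v" for i
  proof -
    have "hl *v (A$i *v v) = Bl$i *v (hl *v v)"
      by (simp add: matrix_vector_mul_assoc eq)
    then have "hl *v (A$i *v v) = 0" using v(2) by simp
    then show ?thesis using v(3) by (simp add: eig_def)
  qed
  then show False using nr v(1) unfolding red_def by blast
qed



lemma stable_of_nred:
  fixes A :: "cmat2^'n"
  assumes dets: "\<And>i. det (A$i) = 1" and nr: "\<not> red A"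
  shows "stable A"
  unfolding stable_def
proof (rule compact_imp_proper_map)
  show "k_space (top_of_set (SL2_tuples :: (cmat2^'n) set))"
    by (rule k_space_closed_subtopology[OF k_space_euclideanreal])
       (simp add: closed_tuples closed_closedin[symmetric])
  show "kc_space (top_of_set (SL2_tuples :: (cmat2^'n) set))"
    by (rule kc_space_subtopology[OF kc_space_euclidean])
  show "(\<lambda>g. conj_act g A) \<in> topspace (top_of_set SL2) \<rightarrow> topspace (top_of_set SL2_tuples)"
    using dets by (auto simp: SL2_def SL2_tuples_iff conj_SL cj_det)
  show "continuous_map (top_of_set SL2) (top_of_set SL2_tuples) (\<lambda>g. conj_act g A) \<or> kc_space (top_of_set SL2)"
    by (intro disjI2 kc_space_subtopology kc_space_euclidean)
  fix K :: "(cmat2^'n) set" assume "compactin (top_of_set SL2_tuples) K"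
  then have K: "compact K" by (simp add: compactin_subtopology)
  define S where "S = {g \<in> SL2. (\<chi> i. cj g (A$i)) \<in> K}"
  have S_eq: "{x \<in> topspace (top_of_set SL2). conj_act x A \<in> K} = S"
    unfolding S_def by (auto simp: SL2_def conj_SL)
  have "closed S"
    unfolding closed_sequential_limits
  proof (intro allI impI)
    fix x l assume h: "(\<forall>n. x n \<in> S) \<and> x \<longlonglongrightarrow> l"
    have "l \<in> SL2" using closed_SL2 h unfolding closed_sequential_limits S_def by blast
    moreover have "(\<chi> i. cj l (A$i)) \<in> K"
    proof -
      have t: "(\<lambda>n. \<chi> i. cj (x n) (A$i)) \<longlonglongrightarrow> (\<chi> i. cj l (A$i))" using h by (intro T_F) blast
      have m: "\<And>n. (\<chi> i. cj (x n) (A$i)) \<in> K" using h unfolding S_def by blast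
      show ?thesis by (rule closed_sequentially[OF compact_imp_closed[OF K] m t])
    qed
    ultimately show "l \<in> S" unfolding S_def by blast
  qed
  moreover have "bounded S" unfolding S_def by (rule bounded_preimage[OF nr K])
  ultimately have "compact S" by (simp add: compact_eq_bounded_closed)
  then show "compactin (top_of_set SL2) {x \<in> topspace (top_of_set SL2). conj_act x A \<in> K}"
    unfolding S_eq by (simp add: compactin_subtopology S_def)
qed




lemma adj2_mult: fixes D P :: cmat2 shows "adj2 (D ** P) = adj2 P ** adj2 D"
  by (simp add: m2s algebra_simps)

lemma cj_comp: "cj (D ** P) M = cj D (cj P M)"
  unfolding cj_def adj2_mult by (simp add: matrix_mul_assoc)

definition Dm :: "complex \<Rightarrow> cmat2" where "Dm s = vector [vector [s, 0], vector [0, 1/s]]"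

lemma det_Dm: "s \<noteq> 0 \<Longrightarrow> det (Dm s) = 1"
  by (simp add: Dm_def det_2)

lemma cj_Dm: assumes "s \<noteq> 0" "T$2$1 = 0"
  shows "cj (Dm s) T = (\<chi> r c. if r = 1 \<and> c = 2 then s^2 * T$1$2 else T$r$c)"
  using assms by (simp add: meq2 mm2 cj_def Dm_def power2_eq_square)

lemma Dm_row: "(Dm s ** P)$2$j = P$2$j / s"
  by (simp add: mm2 Dm_def)

lemma cont_if_const: "continuous_on S f \<Longrightarrow> continuous_on S (\<lambda>t. if C then f t else a)"
  by (cases C) auto

lemma nred_of_stable:
  fixes A :: "cmat2^'n"
  assumes dets: "\<And>i. det (A$i) = 1" and st: "stable A"
  shows "\<not> red A"
proof
  assume "red A"
  then obtain v where v: "v \<noteq> 0" "\<And>i. eig (A$i) v" unfolding red_def by blast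
  obtain P where P: "det P = 1" "(P *v v)$2 = 0" using norm_one(1)[OF v(1)] by blast
  define T where "T i = cj P (A$i)" for i
  have T21: "T i $2$1 = 0" for i
    using eig_e1[OF P(2) Pv_nz[OF P(1) v(1)], of "T i"] cj_eig[OF P(1)] v(2) unfolding T_def by simp
  have dT: "det (T i) = 1" for i unfolding T_def using cj_det[OF P(1)] dets by simp
  define Kf :: "real \<Rightarrow> cmat2^'n" where
    "Kf t = (\<chi> i. \<chi> r c. if r = 1 \<and> c = 2 then (complex_of_real t)^2 * T i $1$2 else T i $r$c)" for t
  define K where "K = Kf ` {0..1}"
  have "continuous_on {0..1} Kf" unfolding Kf_def
    by (intro continuous_on_vec_lambda cont_if_const continuous_intros)
  then have cK: "compact K" unfolding K_def by (intro compact_continuous_image) auto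
  have KS: "K \<subseteq> SL2_tuples"
  proof
    fix x assume "x \<in> K"
    then obtain t where x: "x = Kf t" unfolding K_def by auto
    have "det (x$i) = 1" for i using dT[of i] T21[of i] unfolding x Kf_def by (simp add: det_2)
    then show "x \<in> SL2_tuples" by (simp add: SL2_tuples_iff)
  qed
  have "compactin (top_of_set SL2_tuples) K" by (simp add: compactin_subtopology cK KS)
  then have "compactin (top_of_set SL2) {x. x \<in> topspace (top_of_set SL2) \<and> conj_act x A \<in> K}"
    using compactin_proper_map_preimage st unfolding stable_def by blast
  then have "compact {x. x \<in> SL2 \<and> conj_act x A \<in> K}" by (simp add: compactin_subtopology)
  then have "bounded {x. x \<in> SL2 \<and> conj_act x A \<in> K}" by (rule compact_imp_bounded)
  then obtain Bd where Bd: "\<And>x. x \<in> SL2 \<Longrightarrow> conj_act x A \<in> K \<Longrightarrow> norm x \<le> Bd"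
    unfolding bounded_iff by blast
  obtain j where j: "P$2$j \<noteq> 0"
  proof (cases "P$2$1 = 0")
    case True
    then have "P$2$2 \<noteq> 0" using P(1) by (auto simp: det_2)
    then show ?thesis by (rule that)
  next
    case False then show ?thesis by (rule that)
  qed
  define c where "c = cmod (P$2$j)"
  have c: "c > 0" using j unfolding c_def by simp
  define s where "s = min 1 (c / (\<bar>Bd\<bar> + 1))"
  have s0: "s > 0" using c unfolding s_def by simp
  have s1: "s \<le> 1" unfolding s_def by simp
  have sc: "s * (\<bar>Bd\<bar> + 1) \<le> c"
  proof -
    have "s \<le> c / (\<bar>Bd\<bar> + 1)" unfolding s_def by simp
    then show ?thesis by (simp add: field_simps)
  qed
  define g where "g = Dm (complex_of_real s) ** P"
  have sn: "complex_of_real s \<noteq> 0" using s0 by simp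
  have dg: "det g = 1" unfolding g_def using det_Dm[OF sn] P(1) by (simp add: det_mul)
  have "conj_act g A = Kf s"
  proof -
    have "conj_act g A = (\<chi> i. cj g (A$i))" by (rule conj_SL[OF dg])
    also have "\<dots> = (\<chi> i. cj (Dm (complex_of_real s)) (T i))"
      unfolding g_def cj_comp T_def ..
    also have "\<dots> = Kf s" unfolding Kf_def using cj_Dm[OF sn T21] by simp
    finally show ?thesis .
  qed
  then have "conj_act g A \<in> K" unfolding K_def using s0 s1 by auto
  then have ng: "norm g \<le> Bd" using Bd dg by (simp add: SL2_def)
  have "norm (g$2$j) \<le> norm g" using Finite_Cartesian_Product.norm_nth_le[where x="g$2" and i=j] Finite_Cartesian_Product.norm_nth_le[where x=g and i=2] by linarith
  moreover have "norm (g$2$j) = c / s" unfolding g_def Dm_row c_def using s0 by (simp add: norm_divide)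
  moreover have "c / s \<ge> \<bar>Bd\<bar> + 1" using sc s0 by (simp add: field_simps)
  ultimately show False using ng by linarith
qed

lemma P3:
  fixes A :: "cmat2^'n"
  assumes dets: "\<And>i. det (A$i) = 1"
  shows "stable A \<longleftrightarrow> \<not> red A"
  using stable_of_nred[OF dets] nred_of_stable[OF dets] by blast




theorem theorem4p2:
  fixes \<Gamma> :: "('g, 'b) monoid_scheme"
    and \<epsilon> :: "'n::finite \<Rightarrow> 'g"
    and \<rho> :: "'g \<Rightarrow> cmat2"
    and A :: "cmat2^'n"
  assumes "group \<Gamma>"
    and "\<And>i. \<epsilon> i \<in> carrier \<Gamma>"
    and "generate \<Gamma> (range \<epsilon>) = carrier \<Gamma>"
    and "\<rho> \<in> hom \<Gamma> SL2_group"
    and "A = (\<chi> i. \<rho> (\<epsilon> i))"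
  shows "(stable A \<longleftrightarrow> (\<exists>j k l. stable (triple (\<rho> (\<epsilon> j)) (\<rho> (\<epsilon> k)) (\<rho> (\<epsilon> l)))))
       \<and> (stable A \<longleftrightarrow> (\<exists>j k l. sigma A j k \<noteq> 0 \<or> Delta A j k l \<noteq> 0))
       \<and> (stable A \<longleftrightarrow> \<not> similar_upper_triangular A)
       \<and> (stable A \<longleftrightarrow> irreducible_rep \<Gamma> \<rho>)"
proof -
  note grp = assms(1) and eps = assms(2) and gen = assms(3) and hom = assms(4) and Adef = assms(5)
  have Ai: "A$i = \<rho> (\<epsilon> i)" for i using Adef by simp
  have dets: "\<And>i. det (A$i) = 1" using rho_det[OF grp hom eps] Ai by simp
  have st: "stable A \<longleftrightarrow> \<not> red A" by (rule P3[OF dets])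
  have tr: "stable (triple (\<rho> (\<epsilon> j)) (\<rho> (\<epsilon> k)) (\<rho> (\<epsilon> l))) \<longleftrightarrow>
            \<not> red (triple (A$j) (A$k) (A$l))" for j k l
  proof -
    have "\<forall>t::3. det (triple (A$j) (A$k) (A$l) $ t) = 1"
      using forall_triple[of "\<lambda>M. det M = 1" "A$j" "A$k" "A$l"] dets by simp
    then show ?thesis using P3[of "triple (A$j) (A$k) (A$l)"] Ai by simp
  qed
  have c1: "stable A \<longleftrightarrow> (\<exists>j k l. stable (triple (\<rho> (\<epsilon> j)) (\<rho> (\<epsilon> k)) (\<rho> (\<epsilon> l))))"
    unfolding tr st using red_tuple_triples red_triple_of by blast
  have c2: "stable A \<longleftrightarrow> (\<exists>j k l. sigma A j k \<noteq> 0 \<or> Delta A j k l \<noteq> 0)"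
    unfolding st by (rule P5[OF dets])
  have c3: "stable A \<longleftrightarrow> \<not> similar_upper_triangular A"
    unfolding st P2 ..
  have c4: "stable A \<longleftrightarrow> irreducible_rep \<Gamma> \<rho>"
    unfolding st P1[OF grp eps gen hom Adef] ..
  show ?thesis using c1 c2 c3 c4 by blast
qed


end
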